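(* Let $\mathcal{Y}=\{1,\dots,m\}$ be a finite set of classes and let $\Delta(\mathcal{Y})$ denote the set of probability vectors on $\mathcal{Y}$. Let $u:\mathcal{Y}\times\mathcal{Y}\to\mathbb{R}_+$ be a nonnegative utility function that is nondegenerate, i.e. for every $y\in\mathcal{Y}$ there exists $a\in\mathcal{Y}$ with $u(a,y)>0$. Let $\ell:\Delta(\mathcal{Y})\times\mathcal{Y}\to\mathbb{R}$ be a strictly proper loss function, i.e. for every $q\in\Delta(\mathcal{Y})$, $q$ is the unique minimizer over $p\in\Delta(\mathcal{Y})$ of $\bar\ell(p,q)\equiv\sum_{y\in\mathcal{Y}} q_y\,\ell(p,y)$. Define the utility-weighted loss $\ell^u(p,y)\equiv\sum_{y'\in\mathcal{Y}}\ell(p,y')\,u(y',y)$ and its expectation $\bar\ell^u(p,q)\equiv\sum_{y\in\mathcal{Y}} q_y\,\ell^u(p,y)$, and the expected utility $\bar u(y,q)\equiv\sum_{y'\in\mathcal{Y}}u(y,y')\,q_{y'}$. Then for every $q\in\Delta(\mathcal{Y})$, the problem $\min_{p\in\Delta(\mathcal{Y})}\bar\ell^u(p,q)$ has a unique minimizer $p^u(q)$, given for each class $y$ by $$p^u_y(q)=\frac{\bar u(y,q)}{\sum_{y'\in\mathcal{Y}}\bar u(y',q)}.$$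
   Context: $p_y,q_y$ denote the $y$-th components of probability vectors $p,q\in\Delta(\mathcal{Y})$. *)

theory Defs
  imports "HOL-Analysis.Analysis"
begin

text \<open>Classes are Y = {1..m}. A probability vector is a function nat => real,
nonnegative, summing to 1 over {1..m}, and zero outside {1..m}
(so that each element of Delta(Y) has a unique representation).\<close>

definition prob_simplex :: "nat \<Rightarrow> (nat \<Rightarrow> real) set" where
  "prob_simplex m = {p. (\<forall>y\<in>{1..m}. 0 \<le> p y) \<and> (\<forall>y. y \<notin> {1..m} \<longrightarrow> p y = 0)
                        \<and> (\<Sum>y\<in>{1..m}. p y) = 1}"

definition exp_loss :: "nat \<Rightarrow> ((nat \<Rightarrow> real) \<Rightarrow> nat \<Rightarrow> real) \<Rightarrow> (nat \<Rightarrow> real) \<Rightarrow> (nat \<Rightarrow> real) \<Rightarrow> real" where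
  "exp_loss m l p q = (\<Sum>y\<in>{1..m}. q y * l p y)"

definition strictly_proper :: "nat \<Rightarrow> ((nat \<Rightarrow> real) \<Rightarrow> nat \<Rightarrow> real) \<Rightarrow> bool" where
  "strictly_proper m l \<longleftrightarrow> (\<forall>q\<in>prob_simplex m. \<forall>p\<in>prob_simplex m.
       p \<noteq> q \<longrightarrow> exp_loss m l q q < exp_loss m l p q)"

definition util_loss :: "nat \<Rightarrow> ((nat \<Rightarrow> real) \<Rightarrow> nat \<Rightarrow> real) \<Rightarrow> (nat \<Rightarrow> nat \<Rightarrow> real) \<Rightarrow> (nat \<Rightarrow> real) \<Rightarrow> nat \<Rightarrow> real" where
  "util_loss m l u p y = (\<Sum>y'\<in>{1..m}. l p y' * u y' y)"

definition exp_util :: "nat \<Rightarrow> (nat \<Rightarrow> nat \<Rightarrow> real) \<Rightarrow> nat \<Rightarrow> (nat \<Rightarrow> real) \<Rightarrow> real" where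
  "exp_util m u y q = (\<Sum>y'\<in>{1..m}. u y y' * q y')"

end

theory Submission
  imports Defs
begin

theorem theorem1:
  fixes m :: nat and u :: "nat \<Rightarrow> nat \<Rightarrow> real"
    and l :: "(nat \<Rightarrow> real) \<Rightarrow> nat \<Rightarrow> real" and q :: "nat \<Rightarrow> real"
  assumes m_pos: "m \<ge> 1"
    and u_nonneg: "\<forall>a\<in>{1..m}. \<forall>y\<in>{1..m}. 0 \<le> u a y"
    and u_nondeg: "\<forall>y\<in>{1..m}. \<exists>a\<in>{1..m}. u a y > 0"
    and l_proper: "strictly_proper m l"
    and q_prob: "q \<in> prob_simplex m"
  shows "(\<exists>!p. p \<in> prob_simplex m \<and>
            (\<forall>p'\<in>prob_simplex m. exp_loss m (util_loss m l u) p q \<le> exp_loss m (util_loss m l u) p' q))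
         \<and> (\<forall>p\<in>prob_simplex m.
            (\<forall>p'\<in>prob_simplex m. exp_loss m (util_loss m l u) p q \<le> exp_loss m (util_loss m l u) p' q)
            \<longrightarrow> (\<forall>y\<in>{1..m}. p y = exp_util m u y q / (\<Sum>y'\<in>{1..m}. exp_util m u y' q)))"
proof -
  define E where "E y = exp_util m u y q" for y
  define S where "S = (\<Sum>y'\<in>{1..m}. E y')"
  define r where "r y = (if y \<in> {1..m} then E y / S else 0)" for y
  let ?L = "exp_loss m (util_loss m l u)"
  have qnn: "\<forall>y\<in>{1..m}. 0 \<le> q y" and qs: "(\<Sum>y\<in>{1..m}. q y) = 1"
    using q_prob by (auto simp: prob_simplex_def)
  have Enn: "0 \<le> E y" if "y \<in> {1..m}" for y
    unfolding E_def exp_util_def using u_nonneg qnn that by (auto intro!: sum_nonneg)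
  have S_eq: "S = (\<Sum>y\<in>{1..m}. q y * (\<Sum>a\<in>{1..m}. u a y))"
    unfolding S_def E_def exp_util_def
    by (subst sum.swap) (simp add: sum_distrib_left mult.commute)
  obtain y0 where y0: "y0 \<in> {1..m}" "q y0 > 0"
  proof (rule ccontr)
    assume "\<not> thesis"
    then have "\<forall>y\<in>{1..m}. q y = 0" using that qnn by force
    then show False using qs by simp
  qed
  obtain a0 where a0: "a0 \<in> {1..m}" "u a0 y0 > 0" using u_nondeg y0 by blast
  have "0 < (\<Sum>a\<in>{1..m}. u a y0)"
    using a0 u_nonneg y0 by (intro sum_pos2[of _ a0]) auto
  then have "0 < q y0 * (\<Sum>a\<in>{1..m}. u a y0)" using y0 by simp
  then have Spos: "S > 0" unfolding S_eq
    using y0 qnn u_nonneg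
    by (intro sum_pos2[of _ y0]) (auto intro!: mult_nonneg_nonneg sum_nonneg)
  have r_prob: "r \<in> prob_simplex m"
    unfolding prob_simplex_def r_def using Enn Spos
    by (auto simp: sum_divide_distrib[symmetric] S_def)
  have key: "?L p q = S * exp_loss m l p r" for p
  proof -
    have "?L p q = (\<Sum>y\<in>{1..m}. q y * (\<Sum>y'\<in>{1..m}. l p y' * u y' y))"
      by (simp add: exp_loss_def util_loss_def)
    also have "\<dots> = (\<Sum>y'\<in>{1..m}. E y' * l p y')"
      unfolding E_def exp_util_def sum_distrib_left sum_distrib_right
      by (subst sum.swap) (simp add: mult_ac)
    also have "\<dots> = S * exp_loss m l p r"
      using Spos by (simp add: exp_loss_def r_def sum_distrib_left)
    finally show ?thesis .
  qed
  have rmin: "\<forall>p'\<in>prob_simplex m. ?L r q \<le> ?L p' q"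
  proof
    fix p' assume p': "p' \<in> prob_simplex m"
    show "?L r q \<le> ?L p' q"
    proof (cases "p' = r")
      case False
      then have "exp_loss m l r r < exp_loss m l p' r"
        using l_proper r_prob p' unfolding strictly_proper_def by blast
      then show ?thesis using Spos key by simp
    qed simp
  qed
  have uniq: "p = r" if "p \<in> prob_simplex m" "\<forall>p'\<in>prob_simplex m. ?L p q \<le> ?L p' q" for p
  proof (rule ccontr)
    assume "p \<noteq> r"
    then have "exp_loss m l r r < exp_loss m l p r"
      using l_proper r_prob that(1) unfolding strictly_proper_def by blast
    then have "?L r q < ?L p q" using Spos key by simp
    then show False using that(2) r_prob by force
  qed
  show ?thesis
  proof
    show "\<exists>!p. p \<in> prob_simplex m \<and> (\<forall>p'\<in>prob_simplex m. ?L p q \<le> ?L p' q)"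
      using r_prob rmin uniq by blast
    show "\<forall>p\<in>prob_simplex m. (\<forall>p'\<in>prob_simplex m. ?L p q \<le> ?L p' q)
            \<longrightarrow> (\<forall>y\<in>{1..m}. p y = exp_util m u y q / (\<Sum>y'\<in>{1..m}. exp_util m u y' q))"
    proof (intro ballI impI)
      fix p y assume "p \<in> prob_simplex m" "\<forall>p'\<in>prob_simplex m. ?L p q \<le> ?L p' q" "y \<in> {1..m}"
      then have "p = r" "y \<in> {1..m}" using uniq by auto
      then show "p y = exp_util m u y q / (\<Sum>y'\<in>{1..m}. exp_util m u y' q)"
        by (simp only: r_def S_def E_def if_True)
    qed
  qed
qed

end
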